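(* Let $H$ be a finite, connected, $d$-regular graph on $[n]$ and $\Phi(x,y)$ a standard symmetric polynomial of partial degree $d$. Then $G(\Phi)^*$ has some component isomorphic to $H$ if and only if $U(H,\Phi)\ne\emptyset$.
   Context: For a symmetric $\Phi(x,y)\in\mathbb{C}[x,y]$ of partial degree $d$ (degree $d$ in $y$), write $\Phi(x,y)=\sum_{i=0}^d a_i(x)y^i$. $G(\Phi)$ has vertex set $\mathbb{C}$, the neighbours of $u$ being the roots of $\Phi(u,y)$ with multiplicity (edges = points of $\mathbb{V}(\Phi)$). A component is singular if it has a loop ($\Phi(u,u)=0$), a multiple edge ($\Phi(u,y)$ has a multiple root) or a defective vertex ($a_d(u)=0$). $\Phi$ is standard if it is squarefree, $\Phi(x,x)\not\equiv 0$, and $\Phi$ has no nonconstant factor depending only on $x$ (or only on $y$); then only finitely many components are singular and $G(\Phi)^*$ is $G(\Phi)$ with these removed. With $E$ the edge set of $H$: $S(H,\Phi)=\{\Phi(x_i,x_j):ij\in E\}$, $W(H,\Phi)=\mathbb{V}(S(H,\Phi))\subseteq\mathbb{C}^n$, $Z(H,\Phi)=W(H,\Phi)\cap\bigcup_{i>j}\mathbb{V}(x_i-x_j)$, and $U(H,\Phi)=\overline{W(H,\Phi)\setminus Z(H,\Phi)}$ (Zariski closure). *)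

theory Defs
  imports "HOL-Computational_Algebra.Computational_Algebra"
begin

text \<open>A bivariate polynomial Phi(x,y) = sum_i a_i(x) y^i over the complex numbers is
represented as a polynomial in y whose coefficients a_i are polynomials in x.\<close>

type_synonym bipoly = "complex poly poly"

definition sect :: "bipoly \<Rightarrow> complex \<Rightarrow> complex poly" where
  "sect Phi u = map_poly (\<lambda>a. poly a u) Phi"

definition ev2 :: "bipoly \<Rightarrow> complex \<Rightarrow> complex \<Rightarrow> complex" where
  "ev2 Phi u v = poly (sect Phi u) v"

definition symmetric_bipoly :: "bipoly \<Rightarrow> bool" where
  "symmetric_bipoly Phi \<longleftrightarrow> (\<forall>u v. ev2 Phi u v = ev2 Phi v u)"

definition partial_degree :: "bipoly \<Rightarrow> nat" where
  "partial_degree Phi = degree Phi"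

definition standard :: "bipoly \<Rightarrow> bool" where
  "standard Phi \<longleftrightarrow> squarefree Phi
     \<and> (\<exists>u. ev2 Phi u u \<noteq> 0)
     \<and> (\<forall>p::complex poly. [:p:] dvd Phi \<longrightarrow> degree p = 0)
     \<and> (\<forall>q::complex poly. map_poly (\<lambda>c. [:c:]) q dvd Phi \<longrightarrow> degree q = 0)"

definition Gadj :: "bipoly \<Rightarrow> complex \<Rightarrow> complex \<Rightarrow> bool" where
  "Gadj Phi u v \<longleftrightarrow> ev2 Phi u v = 0"

definition component :: "bipoly \<Rightarrow> complex \<Rightarrow> complex set" where
  "component Phi u = {v. (Gadj Phi)\<^sup>*\<^sup>* u v}"

definition is_component :: "bipoly \<Rightarrow> complex set \<Rightarrow> bool" where
  "is_component Phi C \<longleftrightarrow> (\<exists>u. C = component Phi u)"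

text \<open>A vertex carrying a loop, a multiple edge, or being defective (a_d(u) = 0).\<close>
definition bad_vertex :: "bipoly \<Rightarrow> complex \<Rightarrow> bool" where
  "bad_vertex Phi u \<longleftrightarrow> ev2 Phi u u = 0
     \<or> \<not> rsquarefree (sect Phi u)
     \<or> poly (lead_coeff Phi) u = 0"

definition singular_component :: "bipoly \<Rightarrow> complex set \<Rightarrow> bool" where
  "singular_component Phi C \<longleftrightarrow> (\<exists>u\<in>C. bad_vertex Phi u)"

text \<open>Components of G(Phi)^*: the nonsingular components.\<close>
definition star_component :: "bipoly \<Rightarrow> complex set \<Rightarrow> bool" where
  "star_component Phi C \<longleftrightarrow> is_component Phi C \<and> \<not> singular_component Phi C"

inductive_set poly_fun :: "(('v \<Rightarrow> complex) \<Rightarrow> complex) set" where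
  const: "(\<lambda>x. c) \<in> poly_fun"
| var: "(\<lambda>x. x i) \<in> poly_fun"
| add: "p \<in> poly_fun \<Longrightarrow> q \<in> poly_fun \<Longrightarrow> (\<lambda>x. p x + q x) \<in> poly_fun"
| mult: "p \<in> poly_fun \<Longrightarrow> q \<in> poly_fun \<Longrightarrow> (\<lambda>x. p x * q x) \<in> poly_fun"

definition zariski_closure :: "('v \<Rightarrow> complex) set \<Rightarrow> ('v \<Rightarrow> complex) set" where
  "zariski_closure S = {x. \<forall>p\<in>poly_fun. (\<forall>s\<in>S. p s = 0) \<longrightarrow> p x = 0}"

definition W_set :: "('v \<Rightarrow> 'v \<Rightarrow> bool) \<Rightarrow> bipoly \<Rightarrow> ('v \<Rightarrow> complex) set" where
  "W_set E Phi = {x. \<forall>i j. E i j \<longrightarrow> ev2 Phi (x i) (x j) = 0}"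

definition Z_set :: "('v \<Rightarrow> 'v \<Rightarrow> bool) \<Rightarrow> bipoly \<Rightarrow> ('v \<Rightarrow> complex) set" where
  "Z_set E Phi = W_set E Phi \<inter> {x. \<exists>i j. i \<noteq> j \<and> x i = x j}"

definition U_set :: "('v \<Rightarrow> 'v \<Rightarrow> bool) \<Rightarrow> bipoly \<Rightarrow> ('v \<Rightarrow> complex) set" where
  "U_set E Phi = zariski_closure (W_set E Phi - Z_set E Phi)"

definition simple_graph :: "('v \<Rightarrow> 'v \<Rightarrow> bool) \<Rightarrow> bool" where
  "simple_graph E \<longleftrightarrow> (\<forall>i j. E i j \<longrightarrow> E j i) \<and> (\<forall>i. \<not> E i i)"

definition connected_graph :: "('v \<Rightarrow> 'v \<Rightarrow> bool) \<Rightarrow> bool" where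
  "connected_graph E \<longleftrightarrow> (\<forall>i j. E\<^sup>*\<^sup>* i j)"

definition regular_graph :: "('v \<Rightarrow> 'v \<Rightarrow> bool) \<Rightarrow> nat \<Rightarrow> bool" where
  "regular_graph E d \<longleftrightarrow> (\<forall>i. card {j. E i j} = d)"

definition component_iso :: "('v \<Rightarrow> 'v \<Rightarrow> bool) \<Rightarrow> bipoly \<Rightarrow> complex set \<Rightarrow> bool" where
  "component_iso E Phi C \<longleftrightarrow> (\<exists>f. bij_betw f UNIV C \<and> (\<forall>i j. E i j \<longleftrightarrow> Gadj Phi (f i) (f j)))"

end

theory Submission
  imports Defs
begin

lemma key_roots:
  fixes p :: "complex poly"
  assumes p0: "p \<noteq> 0" and deg: "degree p \<le> d" and fin: "finite S" and cS: "card S = d"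
    and rts: "\<And>s. s \<in> S \<Longrightarrow> poly p s = 0"
  shows "(\<forall>a. poly p a = 0 \<longrightarrow> a \<in> S) \<and> rsquarefree p \<and> degree p = d"
proof -
  have ord1: "order s p \<ge> 1" if "s \<in> S" for s
    using rts[OF that] p0 order_gt_0_iff[of p s] by linarith
  have cnt: "count (mset_set S) b = (if b \<in> S then 1 else 0)" for b
    using fin by (simp add: count_mset_set')
  have sz: "size (proots p) \<le> d" using size_proots_le deg le_trans by blast
  have noextra: False if "mset_set S + {#a#} \<subseteq># proots p" for a
  proof -
    have "size (mset_set S + {#a#}) \<le> size (proots p)" using that size_mset_mono by blast
    then show False using sz cS by simp
  qed
  have A: "a \<in> S" if ra: "poly p a = 0" for a
  proof (rule ccontr)
    assume aS: "a \<notin> S"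
    have oa: "order a p \<ge> 1" using ra p0 order_gt_0_iff[of p a] by linarith
    have "mset_set S + {#a#} \<subseteq># proots p"
    proof (rule mset_subset_eqI)
      fix b show "count (mset_set S + {#a#}) b \<le> count (proots p) b"
      proof (cases "b = a")
        case True then show ?thesis using aS oa p0 cnt[of b] by simp
      next
        case False then show ?thesis using ord1[of b] p0 cnt[of b] by simp
      qed
    qed
    then show False using noextra by blast
  qed
  have B: "order a p \<le> 1" for a
  proof (rule ccontr)
    assume na: "\<not> order a p \<le> 1"
    then have "poly p a = 0" using p0 order_gt_0_iff[of p a] by linarith
    then have aS: "a \<in> S" using A by blast
    have "mset_set S + {#a#} \<subseteq># proots p"
    proof (rule mset_subset_eqI)
      fix b show "count (mset_set S + {#a#}) b \<le> count (proots p) b"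
      proof (cases "b = a")
        case True then show ?thesis using aS na p0 cnt[of b] by simp
      next
        case False then show ?thesis using ord1[of b] p0 cnt[of b] by simp
      qed
    qed
    then show False using noextra by blast
  qed
  have "mset_set S \<subseteq># proots p"
  proof (rule mset_subset_eqI)
    fix b show "count (mset_set S) b \<le> count (proots p) b"
      using ord1[of b] p0 cnt[of b] by simp
  qed
  then have "size (mset_set S) \<le> size (proots p)" using size_mset_mono by blast
  then have "d \<le> degree p" using cS size_proots_le[of p] by simp
  with deg have "degree p = d" by simp
  moreover have "rsquarefree p" using B p0 unfolding rsquarefree_def
    by (metis le_eq_less_or_eq less_one)
  ultimately show ?thesis using A by blast
qed

lemma coeff_sect: "coeff (sect Phi u) i = poly (coeff Phi i) u"
  unfolding sect_def by (simp add: coeff_map_poly)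

lemma sect_nonzero:
  assumes "standard Phi"
  shows "sect Phi u \<noteq> 0"
proof
  assume s0: "sect Phi u = 0"
  define r :: "complex poly" where "r = [:-u, 1:]"
  have dv: "r dvd coeff Phi i" for i
  proof -
    have "poly (coeff Phi i) u = 0" using s0 coeff_sect[of Phi u i] by simp
    then show ?thesis unfolding r_def using poly_eq_0_iff_dvd by blast
  qed
  define Q where "Q = map_poly (\<lambda>a. a div r) Phi"
  have "Phi = [:r:] * Q"
  proof (rule poly_eqI)
    fix i
    have "coeff ([:r:] * Q) i = r * (coeff Phi i div r)"
      unfolding Q_def by (simp add: coeff_map_poly)
    also have "\<dots> = coeff Phi i" using dv[of i] by simp
    finally show "coeff Phi i = coeff ([:r:] * Q) i" by simp
  qed
  then have "[:r:] dvd Phi" by (metis dvd_triv_left)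
  then have "degree r = 0" using assms unfolding standard_def by blast
  then show False unfolding r_def by simp
qed

theorem mainTheorem4:
  fixes E :: "'v::finite \<Rightarrow> 'v \<Rightarrow> bool" and Phi :: bipoly and d :: nat
  assumes "simple_graph E" and "connected_graph E" and "regular_graph E d"
    and "symmetric_bipoly Phi" and "standard Phi" and "partial_degree Phi = d"
  shows "(\<exists>C. star_component Phi C \<and> component_iso E Phi C) \<longleftrightarrow> U_set E Phi \<noteq> {}"
proof
  assume "\<exists>C. star_component Phi C \<and> component_iso E Phi C"
  then obtain C f where bij: "bij_betw f UNIV C" and iso: "\<forall>i j. E i j \<longleftrightarrow> Gadj Phi (f i) (f j)"
    unfolding component_iso_def by blast
  have "f \<in> W_set E Phi - Z_set E Phi"
    using bij iso unfolding W_set_def Z_set_def Gadj_def bij_betw_def inj_def by auto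
  then have "f \<in> U_set E Phi"
    unfolding U_set_def zariski_closure_def by blast
  then show "U_set E Phi \<noteq> {}" by blast
next
  assume "U_set E Phi \<noteq> {}"
  have "W_set E Phi - Z_set E Phi \<noteq> {}"
  proof
    assume "W_set E Phi - Z_set E Phi = {}"
    then have "U_set E Phi = zariski_closure {}"
      unfolding U_set_def by (simp only:)
    then have "U_set E Phi = {x. \<forall>p\<in>poly_fun. p x = 0}"
      unfolding zariski_closure_def by simp
    moreover have "(\<lambda>x. 1) \<in> (poly_fun :: (('v \<Rightarrow> complex) \<Rightarrow> complex) set)"
      by (rule poly_fun.const)
    ultimately have "U_set E Phi = {}" by force
    with \<open>U_set E Phi \<noteq> {}\<close> show False by blast
  qed
  then obtain x where xW: "\<forall>i j. E i j \<longrightarrow> ev2 Phi (x i) (x j) = 0"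
    and xinj: "inj x"
    unfolding W_set_def Z_set_def inj_def by blast
  have irr: "\<not> E i i" for i using assms(1) unfolding simple_graph_def by blast
  have degPhi: "degree Phi = d" using assms(6) unfolding partial_degree_def by simp
  have loc: "(\<forall>a. poly (sect Phi (x i)) a = 0 \<longrightarrow> a \<in> insert (x i) (x ` {j. E i j}) - {x i} \<or> False)
      \<and> rsquarefree (sect Phi (x i)) \<and> degree (sect Phi (x i)) = d
      \<and> ev2 Phi (x i) (x i) \<noteq> 0" for i
  proof -
    let ?p = "sect Phi (x i)"
    let ?S = "x ` {j. E i j}"
    have cS: "card ?S = d"
      using assms(3) xinj unfolding regular_graph_def
      by (metis card_image inj_on_subset subset_UNIV)
    have dp: "degree ?p \<le> d" using degPhi by (intro degree_le) (simp add: coeff_sect coeff_eq_0)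
    have rts: "poly ?p s = 0" if "s \<in> ?S" for s
      using that xW unfolding ev2_def by auto
    have K: "(\<forall>a. poly ?p a = 0 \<longrightarrow> a \<in> ?S) \<and> rsquarefree ?p \<and> degree ?p = d"
      by (rule key_roots[OF sect_nonzero[OF assms(5)] dp finite_imageI[OF finite] cS rts])
    have nS: "x i \<notin> ?S" using xinj irr by (auto simp: inj_def)
    have "ev2 Phi (x i) (x i) \<noteq> 0" using K nS unfolding ev2_def by blast
    then show ?thesis using K nS by blast
  qed
  have nbr: "Gadj Phi (x i) w \<longleftrightarrow> (\<exists>j. E i j \<and> w = x j)" for i w
    using loc[of i] xW unfolding Gadj_def ev2_def by blast
  have good: "\<not> bad_vertex Phi (x i)" for i
  proof -
    have "poly (lead_coeff Phi) (x i) = lead_coeff (sect Phi (x i))"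
      using loc[of i] degPhi by (simp add: coeff_sect)
    moreover have "lead_coeff (sect Phi (x i)) \<noteq> 0"
      using sect_nonzero[OF assms(5)] by simp
    ultimately show ?thesis using loc[of i] unfolding bad_vertex_def by simp
  qed
  obtain i0 :: 'v where True by blast
  define C where "C = component Phi (x i0)"
  have C_eq: "C = range x"
  proof
    show "C \<subseteq> range x"
    proof
      fix w assume "w \<in> C"
      then have "(Gadj Phi)\<^sup>*\<^sup>* (x i0) w" unfolding C_def component_def by simp
      then show "w \<in> range x"
      proof (induction rule: rtranclp_induct)
        case base then show ?case by simp
      next
        case (step y z)
        then obtain i where "y = x i" by blast
        with step(2) nbr show ?case by blast
      qed
    qed
  next
    show "range x \<subseteq> C"
    proof
      fix w assume "w \<in> range x"
      then obtain j where wj: "w = x j" by blast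
      have "E\<^sup>*\<^sup>* i0 j" using assms(2) unfolding connected_graph_def by blast
      then have "(Gadj Phi)\<^sup>*\<^sup>* (x i0) (x j)"
      proof (induction rule: rtranclp_induct)
        case base then show ?case by simp
      next
        case (step y z)
        then have "Gadj Phi (x y) (x z)" using nbr by blast
        with step(3) show ?case by (rule rtranclp.rtrancl_into_rtrancl)
      qed
      then show "w \<in> C" unfolding C_def component_def wj by simp
    qed
  qed
  have "star_component Phi C"
    unfolding star_component_def is_component_def singular_component_def
    using C_eq good C_def by blast
  moreover have "component_iso E Phi C"
    unfolding component_iso_def
  proof (intro exI conjI allI)
    show "bij_betw x UNIV C" using C_eq xinj by (simp add: bij_betw_def)
    fix i j show "E i j \<longleftrightarrow> Gadj Phi (x i) (x j)"
      using nbr xinj by (auto simp: inj_def)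
  qed
  ultimately show "\<exists>C. star_component Phi C \<and> component_iso E Phi C" by blast
qed

end
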